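(* A Turing degree $\mathbf{d}$ is low for embeddings if and only if it is low for bi-embeddings.
   Context: A Turing degree $\mathbf{d}$ is low for embeddings if for all computable structures $\mathcal{A},\mathcal{B}$: whenever there is a $\mathbf{d}$-computable isomorphic embedding $f\colon\mathcal{A}\hookrightarrow\mathcal{B}$, there is a computable isomorphic embedding $g\colon\mathcal{A}\hookrightarrow\mathcal{B}$. Write $\mathcal{A}\approx_{\mathbf{d}}\mathcal{B}$ if there are $\mathbf{d}$-computable embeddings $\mathcal{A}\hookrightarrow\mathcal{B}$ and $\mathcal{B}\hookrightarrow\mathcal{A}$. The degree $\mathbf{d}$ is low for bi-embeddings if for all computable structures $\mathcal{A},\mathcal{B}$, $\mathcal{A}\approx_{\mathbf{d}}\mathcal{B}$ implies $\mathcal{A}\approx_{\mathbf{0}}\mathcal{B}$. *)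

theory Defs
  imports Main "HOL-Library.Nat_Bijection"
begin

datatype recf =
    Zero
  | Succ
  | Proj nat
  | Comp recf "recf list"
  | Prim recf recf
  | Mu recf
  | Orc

inductive eval :: "nat set \<Rightarrow> recf \<Rightarrow> nat list \<Rightarrow> nat \<Rightarrow> bool" for X :: "nat set" where
  eval_zero: "eval X Zero xs 0"
| eval_succ: "eval X Succ (x # xs) (Suc x)"
| eval_proj: "i < length xs \<Longrightarrow> eval X (Proj i) xs (xs ! i)"
| eval_orc: "eval X Orc (x # xs) (if x \<in> X then 1 else 0)"
| eval_comp: "list_all2 (\<lambda>g y. eval X g xs y) gs ys \<Longrightarrow> eval X f ys z
      \<Longrightarrow> eval X (Comp f gs) xs z"
| eval_prim0: "eval X f xs y \<Longrightarrow> eval X (Prim f g) (0 # xs) y"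
| eval_primS: "eval X (Prim f g) (n # xs) y \<Longrightarrow> eval X g (y # n # xs) z
      \<Longrightarrow> eval X (Prim f g) (Suc n # xs) z"
| eval_mu: "eval X f (n # xs) 0 \<Longrightarrow> (\<forall>m<n. \<exists>y. eval X f (m # xs) (Suc y))
      \<Longrightarrow> eval X (Mu f) xs n"

text \<open>A total function is X-computable (computable relative to the oracle set X).
  A Turing degree d is represented by any set X in it; 0 by the empty set.\<close>
definition comp_fun :: "nat set \<Rightarrow> (nat \<Rightarrow> nat) \<Rightarrow> bool" where
  "comp_fun X f \<longleftrightarrow> (\<exists>p. \<forall>x. eval X p [x] (f x))"

definition comp_set :: "nat set \<Rightarrow> nat set \<Rightarrow> bool" where
  "comp_set X A \<longleftrightarrow> comp_fun X (\<lambda>x. if x \<in> A then 1 else 0)"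

text \<open>A language: a set of relation symbols with arities and a set of function
  symbols with arities (constants are 0-ary function symbols).\<close>
record signature =
  rels :: "nat set"
  rar  :: "nat \<Rightarrow> nat"
  funs :: "nat set"
  far  :: "nat \<Rightarrow> nat"

record struc =
  univ :: "nat set"
  rel  :: "nat \<Rightarrow> nat list \<Rightarrow> bool"
  fn   :: "nat \<Rightarrow> nat list \<Rightarrow> nat"

definition comp_sig :: "signature \<Rightarrow> bool" where
  "comp_sig L \<longleftrightarrow> comp_set {} (rels L) \<and> comp_fun {} (rar L)
                 \<and> comp_set {} (funs L) \<and> comp_fun {} (far L)"

definition wf_struc :: "signature \<Rightarrow> struc \<Rightarrow> bool" where
  "wf_struc L A \<longleftrightarrow> univ A \<noteq> {} \<and>
     (\<forall>i \<in> funs L. \<forall>as. length as = far L i \<and> set as \<subseteq> univ A \<longrightarrow> fn A i as \<in> univ A)"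

definition rel_diag :: "signature \<Rightarrow> struc \<Rightarrow> nat set" where
  "rel_diag L A = {list_encode (i # as) | i as. i \<in> rels L \<and> length as = rar L i
                      \<and> set as \<subseteq> univ A \<and> rel A i as}"

definition fun_table :: "signature \<Rightarrow> struc \<Rightarrow> nat \<Rightarrow> nat" where
  "fun_table L A n = (case list_decode n of
       [] \<Rightarrow> 0
     | i # as \<Rightarrow> (if i \<in> funs L \<and> length as = far L i \<and> set as \<subseteq> univ A
                  then fn A i as else 0))"

definition comp_struc :: "signature \<Rightarrow> struc \<Rightarrow> bool" where
  "comp_struc L A \<longleftrightarrow> wf_struc L A \<and> comp_set {} (univ A)
      \<and> comp_set {} (rel_diag L A) \<and> comp_fun {} (fun_table L A)"

text \<open>Isomorphic embedding of A into B (as a map on natural numbers; only its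
  restriction to the universe of A matters).\<close>
definition is_emb :: "signature \<Rightarrow> struc \<Rightarrow> struc \<Rightarrow> (nat \<Rightarrow> nat) \<Rightarrow> bool" where
  "is_emb L A B f \<longleftrightarrow> inj_on f (univ A) \<and> f ` univ A \<subseteq> univ B
     \<and> (\<forall>i \<in> rels L. \<forall>as. length as = rar L i \<and> set as \<subseteq> univ A
            \<longrightarrow> (rel A i as \<longleftrightarrow> rel B i (map f as)))
     \<and> (\<forall>i \<in> funs L. \<forall>as. length as = far L i \<and> set as \<subseteq> univ A
            \<longrightarrow> f (fn A i as) = fn B i (map f as))"

definition emb_X :: "nat set \<Rightarrow> signature \<Rightarrow> struc \<Rightarrow> struc \<Rightarrow> bool" where
  "emb_X X L A B \<longleftrightarrow> (\<exists>f. comp_fun X f \<and> is_emb L A B f)"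

definition biemb_X :: "nat set \<Rightarrow> signature \<Rightarrow> struc \<Rightarrow> struc \<Rightarrow> bool" where
  "biemb_X X L A B \<longleftrightarrow> emb_X X L A B \<and> emb_X X L B A"

definition low_for_embeddings :: "nat set \<Rightarrow> bool" where
  "low_for_embeddings D \<longleftrightarrow> (\<forall>L A B. comp_sig L \<and> comp_struc L A \<and> comp_struc L B
       \<longrightarrow> emb_X D L A B \<longrightarrow> emb_X {} L A B)"

definition low_for_biembeddings :: "nat set \<Rightarrow> bool" where
  "low_for_biembeddings D \<longleftrightarrow> (\<forall>L A B. comp_sig L \<and> comp_struc L A \<and> comp_struc L B
       \<longrightarrow> biemb_X D L A B \<longrightarrow> biemb_X {} L A B)"

end

theory Submission
  imports Defs
begin

definition cfn :: "nat set \<Rightarrow> nat \<Rightarrow> (nat list \<Rightarrow> nat) \<Rightarrow> bool" where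
  "cfn X k F \<longleftrightarrow> (\<exists>p. \<forall>xs. length xs = k \<longrightarrow> eval X p xs (F xs))"

definition cpred :: "nat set \<Rightarrow> nat \<Rightarrow> (nat list \<Rightarrow> bool) \<Rightarrow> bool" where
  "cpred X k P \<longleftrightarrow> cfn X k (\<lambda>xs. if P xs then 1 else 0)"

lemma cfn_eq: "cfn X k F \<Longrightarrow> (\<And>xs. length xs = k \<Longrightarrow> F xs = G xs) \<Longrightarrow> cfn X k G"
  unfolding cfn_def by metis

lemma cpred_eq: "cpred X k P \<Longrightarrow> (\<And>xs. length xs = k \<Longrightarrow> P xs = Q xs) \<Longrightarrow> cpred X k Q"
  unfolding cpred_def by (erule cfn_eq) simp

lemma cfn_zero: "cfn X k (\<lambda>xs. 0)"
  unfolding cfn_def by (metis eval_zero)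

lemma cfn_proj: "i < k \<Longrightarrow> cfn X k (\<lambda>xs. xs ! i)"
  unfolding cfn_def by (metis eval_proj)

lemma cfn_succ1: "cfn X 1 (\<lambda>xs. Suc (xs ! 0))"
  unfolding cfn_def
proof (intro exI allI impI)
  fix xs :: "nat list" assume "length xs = 1"
  then obtain x where "xs = [x]" by (metis One_nat_def length_0_conv length_Suc_conv)
  then show "eval X Succ xs (Suc (xs ! 0))" using eval_succ[of X x "[]"] by simp
qed

lemma cfn_orc1: "cfn X 1 (\<lambda>xs. if xs ! 0 \<in> X then 1 else 0)"
  unfolding cfn_def
proof (intro exI allI impI)
  fix xs :: "nat list" assume "length xs = 1"
  then obtain x where "xs = [x]" by (metis One_nat_def length_0_conv length_Suc_conv)
  then show "eval X Orc xs (if xs ! 0 \<in> X then 1 else 0)" using eval_orc[of X x "[]"] by simp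
qed

lemma progs_exist:
  assumes "\<forall>F\<in>set Fs. cfn X k F"
  shows "\<exists>ps. list_all2 (\<lambda>p F. \<forall>xs. length xs = k \<longrightarrow> eval X p xs (F xs)) ps Fs"
  using assms
proof (induction Fs)
  case Nil then show ?case by auto
next
  case (Cons F Fs)
  then obtain ps where "list_all2 (\<lambda>p F. \<forall>xs. length xs = k \<longrightarrow> eval X p xs (F xs)) ps Fs" by auto
  moreover obtain p where "\<forall>xs. length xs = k \<longrightarrow> eval X p xs (F xs)" using Cons.prems unfolding cfn_def by auto
  ultimately show ?case by (intro exI[of _ "p # ps"]) auto
qed

lemma cfn_comp_list:
  assumes "cfn X (length Fs) G" "\<forall>F\<in>set Fs. cfn X k F"
  shows "cfn X k (\<lambda>xs. G (map (\<lambda>F. F xs) Fs))"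
proof -
  obtain ps where ps: "list_all2 (\<lambda>p F. \<forall>xs. length xs = k \<longrightarrow> eval X p xs (F xs)) ps Fs"
    using progs_exist[OF assms(2)] by blast
  obtain q where q: "\<forall>ys. length ys = length Fs \<longrightarrow> eval X q ys (G ys)" using assms(1) unfolding cfn_def by auto
  show ?thesis unfolding cfn_def
  proof (intro exI allI impI)
    fix xs :: "nat list" assume xs: "length xs = k"
    have "list_all2 (\<lambda>g y. eval X g xs y) ps (map (\<lambda>F. F xs) Fs)"
      using ps xs by (auto simp: list_all2_conv_all_nth)
    then show "eval X (Comp q ps) xs (G (map (\<lambda>F. F xs) Fs))"
      using q by (intro eval_comp) auto
  qed
qed

lemma cfn_comp1:
  assumes "cfn X 1 (\<lambda>xs. g (xs ! 0))" "cfn X k A"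
  shows "cfn X k (\<lambda>xs. g (A xs))"
  using cfn_comp_list[of X "[A]" "\<lambda>xs. g (xs ! 0)" k] assms by simp

lemma cfn_comp2:
  assumes "cfn X 2 (\<lambda>xs. g (xs ! 0) (xs ! 1))" "cfn X k A" "cfn X k B"
  shows "cfn X k (\<lambda>xs. g (A xs) (B xs))"
  using cfn_comp_list[of X "[A, B]" "\<lambda>xs. g (xs ! 0) (xs ! 1)" k] assms by (simp add: numeral_2_eq_2)

lemma cfn_comp3:
  assumes "cfn X 3 (\<lambda>xs. g (xs ! 0) (xs ! 1) (xs ! 2))" "cfn X k A" "cfn X k B" "cfn X k C"
  shows "cfn X k (\<lambda>xs. g (A xs) (B xs) (C xs))"
  using cfn_comp_list[of X "[A, B, C]" "\<lambda>xs. g (xs ! 0) (xs ! 1) (xs ! 2)" k] assms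
  by (simp add: numeral_3_eq_3)

primrec primf :: "(nat list \<Rightarrow> nat) \<Rightarrow> (nat list \<Rightarrow> nat) \<Rightarrow> nat \<Rightarrow> nat list \<Rightarrow> nat" where
  "primf F G 0 ys = F ys"
| "primf F G (Suc n) ys = G (primf F G n ys # n # ys)"

lemma cfn_prim:
  assumes "cfn X k F" "cfn X (Suc (Suc k)) G"
  shows "cfn X (Suc k) (\<lambda>xs. primf F G (hd xs) (tl xs))"
proof -
  obtain p where p: "\<forall>ys. length ys = k \<longrightarrow> eval X p ys (F ys)" using assms(1) unfolding cfn_def by auto
  obtain q where q: "\<forall>ys. length ys = Suc (Suc k) \<longrightarrow> eval X q ys (G ys)" using assms(2) unfolding cfn_def by auto
  have *: "length ys = k \<Longrightarrow> eval X (Prim p q) (n # ys) (primf F G n ys)" for n ys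
  proof (induction n)
    case 0 then show ?case using p by (auto intro: eval_prim0)
  next
    case (Suc n) then show ?case using q by (auto intro: eval_primS[where y="primf F G n ys"])
  qed
  show ?thesis unfolding cfn_def
  proof (intro exI allI impI)
    fix xs :: "nat list" assume "length xs = Suc k"
    then obtain n ys where "xs = n # ys" "length ys = k" by (metis length_Suc_conv)
    then show "eval X (Prim p q) xs (primf F G (hd xs) (tl xs))" using * by simp
  qed
qed

lemma cfn_mu:
  assumes "cfn X (Suc k) F" "\<And>xs. length xs = k \<Longrightarrow> \<exists>n. F (n # xs) = 0"
  shows "cfn X k (\<lambda>xs. LEAST n. F (n # xs) = 0)"
proof -
  obtain p where p: "\<forall>ys. length ys = Suc k \<longrightarrow> eval X p ys (F ys)" using assms(1) unfolding cfn_def by auto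
  show ?thesis unfolding cfn_def
  proof (intro exI allI impI)
    fix xs :: "nat list" assume xs: "length xs = k"
    let ?n = "LEAST n. F (n # xs) = 0"
    have z: "F (?n # xs) = 0" using assms(2)[OF xs] by (metis (mono_tags, lifting) LeastI)
    have "\<forall>m<?n. \<exists>y. eval X p (m # xs) (Suc y)"
    proof (intro allI impI)
      fix m assume "m < ?n"
      then have "F (m # xs) \<noteq> 0" using not_less_Least by blast
      then obtain y where "F (m # xs) = Suc y" using not0_implies_Suc by blast
      then show "\<exists>y. eval X p (m # xs) (Suc y)" using p xs by (metis length_Cons)
    qed
    then show "eval X (Mu p) xs ?n" using p xs z by (intro eval_mu) (metis length_Cons, simp)
  qed
qed

lemma cfn_const: "cfn X k (\<lambda>xs. c)"
proof (induction c)
  case 0 then show ?case by (rule cfn_zero)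
next
  case (Suc c) then show ?case using cfn_comp1[OF cfn_succ1, of X k "\<lambda>xs. c"] by simp
qed

lemma cfn_var: "i < k \<Longrightarrow> cfn X k (\<lambda>xs. xs ! i)" by (rule cfn_proj)

lemma cfn_Suc: "cfn X k A \<Longrightarrow> cfn X k (\<lambda>xs. Suc (A xs))"
  by (rule cfn_comp1[OF cfn_succ1])

lemma list_len_ex:
  "length xs = Suc k \<Longrightarrow> xs = hd xs # tl xs" by (cases xs) auto

lemma mapnth: "length xs = k \<Longrightarrow> map ((!) xs) [0..<k] = xs"
  by (metis map_nth)

lemma cfn_prim':
  assumes "cfn X k F" "cfn X (Suc (Suc k)) G" "k' = Suc k"
  shows "cfn X k' (\<lambda>xs. primf F G (hd xs) (tl xs))"
  using cfn_prim[OF assms(1,2)] assms(3) by simp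

lemma cfn_shift_hd:
  assumes "cfn X (Suc k) H" "cfn X k B"
  shows "cfn X k (\<lambda>xs. H (B xs # xs))"
proof -
  let ?Fs = "B # map (\<lambda>i xs. xs ! i) [0..<k]"
  have "cfn X k (\<lambda>xs. H (map (\<lambda>F. F xs) ?Fs))"
    using assms by (intro cfn_comp_list) (auto intro: cfn_proj)
  then show ?thesis
    by (rule cfn_eq) (simp add: comp_def mapnth)
qed

lemma cfn_drop_hd:
  assumes "cfn X k H"
  shows "cfn X (Suc k) (\<lambda>xs. H (tl xs))"
proof -
  let ?Fs = "map (\<lambda>i xs. xs ! Suc i) [0..<k]"
  have "cfn X (Suc k) (\<lambda>xs. H (map (\<lambda>F. F xs) ?Fs))"
    using assms by (intro cfn_comp_list) (auto intro: cfn_proj)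
  then show ?thesis
  proof (rule cfn_eq)
    fix xs :: "nat list" assume "length xs = Suc k"
    then obtain y ys where "xs = y # ys" "length ys = k" by (metis length_Suc_conv)
    then show "H (map (\<lambda>F. F xs) ?Fs) = H (tl xs)" by (simp add: comp_def mapnth)
  qed
qed

lemma len2: "length xs = 2 \<Longrightarrow> \<exists>a b. xs = [a, b]"
  by (metis (no_types, lifting) One_nat_def Suc_1 length_0_conv length_Suc_conv)
lemma len1: "length xs = 1 \<Longrightarrow> \<exists>a. xs = [a]"
  by (metis One_nat_def length_0_conv length_Suc_conv)
lemma len3: "length xs = 3 \<Longrightarrow> \<exists>a b c. xs = [a, b, c]"
  by (metis (no_types, lifting) numeral_3_eq_3 length_0_conv length_Suc_conv)

lemma cfn_add0: "cfn X 2 (\<lambda>xs. xs ! 0 + xs ! 1)"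
proof -
  have "cfn X 2 (\<lambda>xs. primf (\<lambda>ys. ys ! 0) (\<lambda>zs. Suc (zs ! 0)) (hd xs) (tl xs))"
    by (intro cfn_prim' cfn_proj cfn_Suc) auto
  then show ?thesis
  proof (rule cfn_eq)
    fix xs :: "nat list" assume "length xs = 2"
    then obtain a b where "xs = [a, b]" using len2 by blast
    then show "primf (\<lambda>ys. ys ! 0) (\<lambda>zs. Suc (zs ! 0)) (hd xs) (tl xs) = xs ! 0 + xs ! 1"
      by (induction a arbitrary: xs) auto
  qed
qed
lemma cfn_pred0: "cfn X 1 (\<lambda>xs. xs ! 0 - 1)"
proof -
  have "cfn X 1 (\<lambda>xs. primf (\<lambda>ys. 0) (\<lambda>zs. zs ! 1) (hd xs) (tl xs))"
    by (intro cfn_prim' cfn_proj cfn_zero) auto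
  then show ?thesis
  proof (rule cfn_eq)
    fix xs :: "nat list" assume "length xs = 1"
    then obtain a where "xs = [a]" using len1 by blast
    then show "primf (\<lambda>ys. 0) (\<lambda>zs. zs ! 1) (hd xs) (tl xs) = xs ! 0 - 1"
      by (cases a) auto
  qed
qed

lemma cfn_sub0: "cfn X 2 (\<lambda>xs. xs ! 1 - xs ! 0)"
proof -
  have "cfn X 2 (\<lambda>xs. primf (\<lambda>ys. ys ! 0) (\<lambda>zs. zs ! 0 - 1) (hd xs) (tl xs))"
    by (intro cfn_prim' cfn_proj cfn_comp1[OF cfn_pred0, of X _ "\<lambda>zs. zs ! 0"]) auto
  then show ?thesis
  proof (rule cfn_eq)
    fix xs :: "nat list" assume "length xs = 2"
    then obtain a b where "xs = [a, b]" using len2 by blast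
    then show "primf (\<lambda>ys. ys ! 0) (\<lambda>zs. zs ! 0 - 1) (hd xs) (tl xs) = xs ! 1 - xs ! 0"
      by (induction a arbitrary: xs) auto
  qed
qed

lemma cfn_add: "cfn X k A \<Longrightarrow> cfn X k B \<Longrightarrow> cfn X k (\<lambda>xs. A xs + B xs)"
  by (rule cfn_comp2[OF cfn_add0])

lemma cfn_sub: "cfn X k A \<Longrightarrow> cfn X k B \<Longrightarrow> cfn X k (\<lambda>xs. A xs - B xs)"
  using cfn_comp2[where g="\<lambda>a b. b - a", OF cfn_sub0, where A=B and B=A] by simp

lemma cfn_mult0: "cfn X 2 (\<lambda>xs. xs ! 0 * xs ! 1)"
proof -
  have "cfn X 2 (\<lambda>xs. primf (\<lambda>ys. 0) (\<lambda>zs. zs ! 0 + zs ! 2) (hd xs) (tl xs))"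
    by (intro cfn_prim' cfn_proj cfn_add cfn_zero) auto
  then show ?thesis
  proof (rule cfn_eq)
    fix xs :: "nat list" assume "length xs = 2"
    then obtain a b where "xs = [a, b]" using len2 by blast
    then show "primf (\<lambda>ys. 0) (\<lambda>zs. zs ! 0 + zs ! 2) (hd xs) (tl xs) = xs ! 0 * xs ! 1"
      by (induction a arbitrary: xs) auto
  qed
qed

lemma cfn_mult: "cfn X k A \<Longrightarrow> cfn X k B \<Longrightarrow> cfn X k (\<lambda>xs. A xs * B xs)"
  by (rule cfn_comp2[OF cfn_mult0])

lemma cfn_tri0: "cfn X 1 (\<lambda>xs. triangle (xs ! 0))"
proof -
  have "cfn X 1 (\<lambda>xs. primf (\<lambda>ys. 0) (\<lambda>zs. zs ! 0 + Suc (zs ! 1)) (hd xs) (tl xs))"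
    by (intro cfn_prim' cfn_proj cfn_add cfn_Suc cfn_zero) auto
  then show ?thesis
  proof (rule cfn_eq)
    fix xs :: "nat list" assume "length xs = 1"
    then obtain a where "xs = [a]" using len1 by blast
    then show "primf (\<lambda>ys. 0) (\<lambda>zs. zs ! 0 + Suc (zs ! 1)) (hd xs) (tl xs) = triangle (xs ! 0)"
      by (induction a arbitrary: xs) auto
  qed
qed

lemma cfn_tri: "cfn X k A \<Longrightarrow> cfn X k (\<lambda>xs. triangle (A xs))"
  by (rule cfn_comp1[OF cfn_tri0])

lemma cfn_pe: "cfn X k A \<Longrightarrow> cfn X k B \<Longrightarrow> cfn X k (\<lambda>xs. prod_encode (A xs, B xs))"
  apply (rule cfn_eq[where F="\<lambda>xs. triangle (A xs + B xs) + A xs"])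
   apply (intro cfn_add cfn_tri; assumption?)
  apply (auto simp: prod_encode_def)
  done

lemma cpred_cfn: "cpred X k P \<Longrightarrow> cfn X k (\<lambda>xs. if P xs then 1 else 0)"
  by (simp add: cpred_def)

lemma cpred_const: "cpred X k (\<lambda>xs. b)"
  unfolding cpred_def by (rule cfn_const)

lemma cpred_eq0: "cfn X k A \<Longrightarrow> cfn X k B \<Longrightarrow> cpred X k (\<lambda>xs. A xs = B xs)"
  unfolding cpred_def
  apply (rule cfn_eq[where F="\<lambda>xs. 1 - ((A xs - B xs) + (B xs - A xs))"])
   apply (intro cfn_add cfn_sub cfn_const ; assumption?)
  apply (auto simp: cpred_def)
  done

lemma cpred_less: "cfn X k A \<Longrightarrow> cfn X k B \<Longrightarrow> cpred X k (\<lambda>xs. A xs < B xs)"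
  unfolding cpred_def
  apply (rule cfn_eq[where F="\<lambda>xs. 1 - (1 - (B xs - A xs))"])
   apply (intro cfn_add cfn_sub cfn_const ; assumption?)
  apply (auto simp: cpred_def)
  done

lemma cpred_not: "cpred X k P \<Longrightarrow> cpred X k (\<lambda>xs. \<not> P xs)"
  unfolding cpred_def
  apply (rule cfn_eq[where F="\<lambda>xs. 1 - (if P xs then 1 else 0)"])
   apply (intro cfn_sub cfn_const ; assumption?)
  apply (auto simp: cpred_def)
  done

lemma cpred_conj: "cpred X k P \<Longrightarrow> cpred X k Q \<Longrightarrow> cpred X k (\<lambda>xs. P xs \<and> Q xs)"
  unfolding cpred_def
  apply (rule cfn_eq[where F="\<lambda>xs. (if P xs then 1 else 0) * (if Q xs then 1 else 0)"])
   apply (intro cfn_mult ; assumption?)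
  apply (auto simp: cpred_def)
  done

lemma cpred_disj: "cpred X k P \<Longrightarrow> cpred X k Q \<Longrightarrow> cpred X k (\<lambda>xs. P xs \<or> Q xs)"
  by (drule cpred_not, drule cpred_not, drule (1) cpred_conj, drule cpred_not) simp

lemma cpred_le: "cfn X k A \<Longrightarrow> cfn X k B \<Longrightarrow> cpred X k (\<lambda>xs. A xs \<le> B xs)"
  by (drule (1) cpred_less[where A=B and B=A], drule cpred_not) (simp add: not_less)

lemma cfn_if: "cpred X k P \<Longrightarrow> cfn X k A \<Longrightarrow> cfn X k B \<Longrightarrow> cfn X k (\<lambda>xs. if P xs then A xs else B xs)"
  unfolding cpred_def
  apply (rule cfn_eq[where F="\<lambda>xs. (if P xs then 1 else 0) * A xs + (1 - (if P xs then 1 else 0)) * B xs"])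
   apply (intro cfn_mult cfn_add cfn_sub cfn_const ; assumption?)
  apply (auto simp: cpred_def)
  done

lemma cpred_if: "cpred X k P \<Longrightarrow> cpred X k Q \<Longrightarrow> cpred X k R \<Longrightarrow> cpred X k (\<lambda>xs. if P xs then Q xs else R xs)"
  unfolding cpred_def[of X k "\<lambda>xs. if P xs then Q xs else R xs"]
  apply (rule cfn_eq[where F="\<lambda>xs. if P xs then (if Q xs then 1 else 0) else (if R xs then 1 else 0)"])
   apply (intro cfn_if cpred_cfn cfn_const; assumption?)
  apply (auto simp: cpred_def)
  done

lemma cfn_mu':
  assumes "cfn X (Suc k) F" "\<And>xs. length xs = k \<Longrightarrow> \<exists>n. F (n # xs) = 0"
    "\<And>xs. length xs = k \<Longrightarrow> (LEAST n. F (n # xs) = 0) = H xs"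
  shows "cfn X k H"
  using cfn_mu[OF assms(1,2)] assms(3) by (rule cfn_eq)

lemma tri_mono: "a \<le> b \<Longrightarrow> triangle a \<le> triangle b"
  by (induction b) (auto simp: le_Suc_eq)

definition pds :: "nat \<Rightarrow> nat" where "pds n = (LEAST s. n < triangle (Suc s))"

lemma pds_prop: "triangle (pds n) \<le> n \<and> n < triangle (Suc (pds n))"
proof -
  have ex: "n < triangle (Suc n)" by (induction n) auto
  have 1: "n < triangle (Suc (pds n))" unfolding pds_def by (rule LeastI[of "\<lambda>s. n < triangle (Suc s)", OF ex])
  have 2: "triangle (pds n) \<le> n"
  proof (cases "pds n")
    case 0 then show ?thesis by simp
  next
    case (Suc m)
    then have "\<not> n < triangle (Suc m)" unfolding pds_def by (metis lessI not_less_Least)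
    then show ?thesis using Suc by simp
  qed
  show ?thesis using 1 2 by simp
qed

lemma pd_via_pds: "prod_decode n = (n - triangle (pds n), pds n - (n - triangle (pds n)))"
proof -
  have p: "triangle (pds n) \<le> n" "n < triangle (pds n) + Suc (pds n)" using pds_prop[of n] by auto
  have "prod_encode (n - triangle (pds n), pds n - (n - triangle (pds n))) = n"
    using p unfolding prod_encode_def by auto
  then show ?thesis by (metis prod_encode_inverse)
qed

lemma cfn_pds0: "cfn X 1 (\<lambda>xs. pds (xs ! 0))"
proof (rule cfn_mu'[where F="\<lambda>ys. if ys ! 1 < triangle (Suc (ys ! 0)) then 0 else 1"])
  show "cfn X (Suc 1) (\<lambda>ys. if ys ! 1 < triangle (Suc (ys ! 0)) then 0 else 1)"
    by (intro cfn_if cpred_less cfn_proj cfn_tri cfn_Suc cfn_const) auto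
next
  fix xs :: "nat list" assume "length xs = 1"
  have ex: "n < triangle (Suc n)" for n by (induction n) auto
  show "\<exists>n. (if (n # xs) ! 1 < triangle (Suc ((n # xs) ! 0)) then 0 else 1) = 0"
    using ex[of "xs ! 0"] by (intro exI[of _ "xs ! 0"]) simp
  show "(LEAST n. (if (n # xs) ! 1 < triangle (Suc ((n # xs) ! 0)) then 0 else (1::nat)) = 0) = pds (xs ! 0)"
    unfolding pds_def by simp
qed

lemma cfn_fst0: "cfn X 1 (\<lambda>xs. fst (prod_decode (xs ! 0)))"
  by (rule cfn_eq[where F="\<lambda>xs. xs ! 0 - triangle (pds (xs ! 0))"])
     (auto intro!: cfn_sub cfn_tri cfn_proj cfn_comp1[OF cfn_pds0] simp: pd_via_pds[of "_ ! 0"])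

lemma cfn_snd0: "cfn X 1 (\<lambda>xs. snd (prod_decode (xs ! 0)))"
  by (rule cfn_eq[where F="\<lambda>xs. pds (xs ! 0) - (xs ! 0 - triangle (pds (xs ! 0)))"])
     (auto intro!: cfn_sub cfn_tri cfn_proj cfn_comp1[OF cfn_pds0] simp: pd_via_pds[of "_ ! 0"])

lemma cfn_fst: "cfn X k A \<Longrightarrow> cfn X k (\<lambda>xs. fst (prod_decode (A xs)))"
  by (rule cfn_comp1[OF cfn_fst0])
lemma cfn_snd: "cfn X k A \<Longrightarrow> cfn X k (\<lambda>xs. snd (prod_decode (A xs)))"
  by (rule cfn_comp1[OF cfn_snd0])

definition hdc :: "nat \<Rightarrow> nat" where "hdc n = fst (prod_decode (n - 1))"
definition tlc :: "nat \<Rightarrow> nat" where "tlc n = snd (prod_decode (n - 1))"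
definition itl :: "nat \<Rightarrow> nat \<Rightarrow> nat" where "itl j n = (tlc ^^ j) n"
definition nthc :: "nat \<Rightarrow> nat \<Rightarrow> nat" where "nthc j n = hdc (itl j n)"
definition lenc :: "nat \<Rightarrow> nat" where "lenc n = (LEAST j. itl j n = 0)"

lemma pd0: "prod_decode 0 = (0, 0)"
  using prod_encode_inverse[of "(0,0)"] by (simp add: prod_encode_def)

lemma hdc_enc[simp]: "hdc (Suc (prod_encode (x, y))) = x"
  by (simp add: hdc_def)
lemma tlc_enc[simp]: "tlc (Suc (prod_encode (x, y))) = y"
  by (simp add: tlc_def)
lemma tlc_tl: "tlc (list_encode l) = list_encode (tl l)"
  by (cases l) (auto simp: tlc_def pd0)
lemma hdc_hd: "l \<noteq> [] \<Longrightarrow> hdc (list_encode l) = hd l"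
  by (cases l) auto

lemma itl_enc: "itl j (list_encode l) = list_encode (drop j l)"
  unfolding itl_def
  by (induction j) (auto simp: tlc_tl drop_Suc tl_drop)

lemma nthc_enc: "j < length l \<Longrightarrow> nthc j (list_encode l) = l ! j"
  unfolding nthc_def itl_enc by (simp add: hdc_hd hd_drop_conv_nth)

lemma list_encode_0: "list_encode l = 0 \<longleftrightarrow> l = []"
  by (cases l) auto

lemma lenc_enc: "lenc (list_encode l) = length l"
  unfolding lenc_def itl_enc list_encode_0
  by (rule Least_equality) auto

lemma cfn_hdc: "cfn X k A \<Longrightarrow> cfn X k (\<lambda>xs. hdc (A xs))"
  unfolding hdc_def by (intro cfn_fst cfn_sub cfn_const)
lemma cfn_tlc: "cfn X k A \<Longrightarrow> cfn X k (\<lambda>xs. tlc (A xs))"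
  unfolding tlc_def by (intro cfn_snd cfn_sub cfn_const)

lemma cfn_itl0: "cfn X 2 (\<lambda>xs. itl (xs ! 0) (xs ! 1))"
proof -
  have "cfn X 2 (\<lambda>xs. primf (\<lambda>ys. ys ! 0) (\<lambda>zs. tlc (zs ! 0)) (hd xs) (tl xs))"
    by (intro cfn_prim' cfn_proj cfn_tlc) auto
  then show ?thesis
  proof (rule cfn_eq)
    fix xs :: "nat list" assume "length xs = 2"
    then obtain a b where "xs = [a, b]" using len2 by blast
    then show "primf (\<lambda>ys. ys ! 0) (\<lambda>zs. tlc (zs ! 0)) (hd xs) (tl xs) = itl (xs ! 0) (xs ! 1)"
      by (induction a arbitrary: xs) (auto simp: itl_def)
  qed
qed

lemma cfn_itl: "cfn X k A \<Longrightarrow> cfn X k B \<Longrightarrow> cfn X k (\<lambda>xs. itl (A xs) (B xs))"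
  by (rule cfn_comp2[OF cfn_itl0])

lemma cfn_nthc: "cfn X k A \<Longrightarrow> cfn X k B \<Longrightarrow> cfn X k (\<lambda>xs. nthc (A xs) (B xs))"
  unfolding nthc_def by (intro cfn_hdc cfn_itl)

lemma cfn_lenc0: "cfn X 1 (\<lambda>xs. lenc (xs ! 0))"
proof (rule cfn_mu'[where F="\<lambda>ys. itl (ys ! 0) (ys ! 1)"])
  show "cfn X (Suc 1) (\<lambda>ys. itl (ys ! 0) (ys ! 1))"
    by (intro cfn_itl cfn_proj) auto
next
  fix xs :: "nat list" assume "length xs = 1"
  show "\<exists>n. itl ((n # xs) ! 0) ((n # xs) ! 1) = 0"
    using itl_enc[of "length (list_decode (xs ! 0))" "list_decode (xs ! 0)"]
    by (intro exI[of _ "length (list_decode (xs ! 0))"]) simp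
  show "(LEAST n. itl ((n # xs) ! 0) ((n # xs) ! 1) = 0) = lenc (xs ! 0)"
    unfolding lenc_def by simp
qed

lemma cfn_lenc: "cfn X k A \<Longrightarrow> cfn X k (\<lambda>xs. lenc (A xs))"
  by (rule cfn_comp1[OF cfn_lenc0])

definition mapstep :: "(nat \<Rightarrow> nat) \<Rightarrow> nat list \<Rightarrow> nat" where
  "mapstep h zs = Suc (prod_encode (h (nthc (lenc (zs ! 2) - Suc (zs ! 1)) (zs ! 2)), zs ! 0))"

definition mapc :: "(nat \<Rightarrow> nat) \<Rightarrow> nat \<Rightarrow> nat" where
  "mapc h n = primf (\<lambda>ys. 0) (mapstep h) (lenc n) [n]"

lemma mapc_aux:
  "j \<le> length l \<Longrightarrow> primf (\<lambda>ys. 0) (mapstep h) j [list_encode l]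
     = list_encode (map h (drop (length l - j) l))"
proof (induction j)
  case 0 then show ?case by simp
next
  case (Suc j)
  have lt: "length l - Suc j < length l" using Suc.prems by auto
  have d: "drop (length l - Suc j) l = l ! (length l - Suc j) # drop (length l - j) l"
    using Cons_nth_drop_Suc[OF lt] Suc.prems by (metis Suc_diff_Suc Suc_le_lessD)
  show ?case using Suc by (simp add: mapstep_def lenc_enc nthc_enc[OF lt] d)
qed

lemma mapc_enc: "mapc h (list_encode l) = list_encode (map h l)"
  unfolding mapc_def lenc_enc using mapc_aux[of "length l" l h] by simp

lemma cfn_mapc:
  assumes h: "cfn X 1 (\<lambda>xs. h (xs ! 0))" and A: "cfn X k A"
  shows "cfn X k (\<lambda>xs. mapc h (A xs))"
proof -
  have G: "cfn X (Suc (Suc 1)) (mapstep h)"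
    unfolding mapstep_def
    by (intro cfn_Suc cfn_pe cfn_comp1[OF h] cfn_nthc cfn_sub cfn_lenc cfn_proj) auto
  have "cfn X 2 (\<lambda>xs. primf (\<lambda>ys. 0) (mapstep h) (hd xs) (tl xs))"
    by (rule cfn_prim'[OF cfn_zero G]) simp
  then have "cfn X 2 (\<lambda>xs. primf (\<lambda>ys. 0) (mapstep h) (xs ! 0) [xs ! 1])"
  proof (rule cfn_eq)
    fix xs :: "nat list" assume "length xs = 2"
    then obtain a b where "xs = [a, b]" using len2 by blast
    then show "primf (\<lambda>ys. 0) (mapstep h) (hd xs) (tl xs) = primf (\<lambda>ys. 0) (mapstep h) (xs ! 0) [xs ! 1]" by simp
  qed
  from cfn_comp2[where g="\<lambda>a b. primf (\<lambda>ys. 0) (mapstep h) a [b]", OF this cfn_lenc[OF A] A]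
  show ?thesis unfolding mapc_def .
qed

definition ballstep :: "(nat list \<Rightarrow> bool) \<Rightarrow> nat list \<Rightarrow> nat" where
  "ballstep P zs = zs ! 0 * (if P (tl zs) then 1 else 0)"

lemma ball_aux: "primf (\<lambda>ys. 1) (ballstep P) m ys = (if \<forall>i<m. P (i # ys) then 1 else 0)"
  by (induction m) (auto simp: ballstep_def less_Suc_eq)

lemma cpred_ball:
  assumes P: "cpred X (Suc k) P" and B: "cfn X k B"
    and eq: "\<And>xs. length xs = k \<Longrightarrow> Q xs = (\<forall>i<B xs. P (i # xs))"
  shows "cpred X k Q"
proof -
  have G: "cfn X (Suc (Suc k)) (ballstep P)"
    unfolding ballstep_def
    by (intro cfn_mult cfn_proj cfn_drop_hd[OF cpred_cfn[OF P]]) auto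
  have "cfn X (Suc k) (\<lambda>xs. primf (\<lambda>ys. 1) (ballstep P) (hd xs) (tl xs))"
    using G by (intro cfn_prim cfn_const)
  from cfn_shift_hd[OF this B]
  have "cfn X k (\<lambda>xs. primf (\<lambda>ys. 1) (ballstep P) (B xs) xs)" by simp
  then show ?thesis unfolding cpred_def
    by (rule cfn_eq) (simp add: ball_aux ball_aux[unfolded One_nat_def] eq)
qed

lemma comp_fun_cfn: "comp_fun X f \<longleftrightarrow> cfn X 1 (\<lambda>xs. f (xs ! 0))"
  unfolding comp_fun_def cfn_def
proof
  assume "\<exists>p. \<forall>x. eval X p [x] (f x)"
  then obtain p where "\<forall>x. eval X p [x] (f x)" by auto
  then show "\<exists>p. \<forall>xs. length xs = 1 \<longrightarrow> eval X p xs (f (xs ! 0))"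
    by (metis len1 nth_Cons_0)
next
  assume "\<exists>p. \<forall>xs. length xs = 1 \<longrightarrow> eval X p xs (f (xs ! 0))"
  then obtain p where "\<forall>xs. length xs = 1 \<longrightarrow> eval X p xs (f (xs ! 0))" by auto
  then show "\<exists>p. \<forall>x. eval X p [x] (f x)" by (metis length_Cons list.size(3) One_nat_def nth_Cons_0)
qed

lemma comp_set_cpred: "comp_set X S \<longleftrightarrow> cpred X 1 (\<lambda>xs. xs ! 0 \<in> S)"
  unfolding comp_set_def cpred_def comp_fun_cfn ..

lemma cfn_ext: "comp_fun X f \<Longrightarrow> cfn X k A \<Longrightarrow> cfn X k (\<lambda>xs. f (A xs))"
  unfolding comp_fun_cfn by (rule cfn_comp1)

lemma cpred_ext: "comp_set X S \<Longrightarrow> cfn X k A \<Longrightarrow> cpred X k (\<lambda>xs. A xs \<in> S)"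
  unfolding comp_set_cpred cpred_def by (rule cfn_comp1[where g="\<lambda>a. if a \<in> S then 1 else 0"])

abbreviation cp :: "nat \<Rightarrow> nat" where "cp u \<equiv> fst (prod_decode u)"
abbreviation sd :: "nat \<Rightarrow> nat" where "sd u \<equiv> snd (prod_decode u)"

definition c0 :: "nat list \<Rightarrow> nat" where
  "c0 as = (case as of [] \<Rightarrow> 0 | a # _ \<Rightarrow> cp a)"

definition samec :: "nat list \<Rightarrow> bool" where
  "samec as \<longleftrightarrow> (\<forall>a\<in>set as. cp a = c0 as)"

definition Lp :: "signature \<Rightarrow> signature" where
  "Lp L = \<lparr> rels = {0} \<union> (\<lambda>i. Suc (prod_encode (0, i))) ` rels L \<union> (\<lambda>i. Suc (prod_encode (1, i))) ` funs L,
     rar = (\<lambda>s. if s = 0 then 2 else if cp (s - 1) = 0 then rar L (sd (s - 1))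
               else if cp (s - 1) = 1 then Suc (far L (sd (s - 1))) else 0),
     funs = {}, far = (\<lambda>_. 0) \<rparr>"

definition inU :: "struc \<Rightarrow> struc \<Rightarrow> nat \<Rightarrow> bool" where
  "inU S T u \<longleftrightarrow> (if cp u = 0 then sd u \<in> univ S else sd u \<in> univ T)"

definition Cop :: "struc \<Rightarrow> struc \<Rightarrow> struc" where
  "Cop S T = \<lparr> univ = {u. inU S T u},
     rel = (\<lambda>s as. if s = 0 then length as = 2 \<and> cp (as ! 0) = cp (as ! 1)
       else if cp (s - 1) = 0 then samec as \<and>
            (if c0 as = 0 then rel S (sd (s - 1)) (map sd as) else rel T (sd (s - 1)) (map sd as))
       else if cp (s - 1) = 1 then as \<noteq> [] \<and> samec as \<and>
            (if c0 as = 0 then fn S (sd (s - 1)) (map sd (tl as)) else fn T (sd (s - 1)) (map sd (tl as))) = sd (hd as)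
       else False),
     fn = (\<lambda>_ _. 0) \<rparr>"

definition allU :: "struc \<Rightarrow> struc \<Rightarrow> nat \<Rightarrow> bool" where
  "allU S T t \<longleftrightarrow> (\<forall>i<lenc t. inU S T (nthc i t))"

definition sameC :: "nat \<Rightarrow> bool" where
  "sameC t \<longleftrightarrow> (\<forall>i<lenc t. cp (nthc i t) = cp (hdc t))"

definition Dec :: "signature \<Rightarrow> struc \<Rightarrow> struc \<Rightarrow> nat \<Rightarrow> bool" where
  "Dec L S T n \<longleftrightarrow> \<not> n = 0 \<and>
    (if hdc n = 0 then lenc (tlc n) = 2 \<and> allU S T (tlc n) \<and> cp (nthc 0 (tlc n)) = cp (nthc 1 (tlc n))
     else if cp (hdc n - 1) = 0 then sd (hdc n - 1) \<in> rels L \<and> lenc (tlc n) = rar L (sd (hdc n - 1))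
        \<and> allU S T (tlc n) \<and> sameC (tlc n) \<and>
        (if cp (hdc (tlc n)) = 0 then Suc (prod_encode (sd (hdc n - 1), mapc sd (tlc n))) \<in> rel_diag L S
         else Suc (prod_encode (sd (hdc n - 1), mapc sd (tlc n))) \<in> rel_diag L T)
     else if cp (hdc n - 1) = 1 then sd (hdc n - 1) \<in> funs L \<and> lenc (tlc n) = Suc (far L (sd (hdc n - 1)))
        \<and> allU S T (tlc n) \<and> sameC (tlc n) \<and>
        (if cp (hdc (tlc n)) = 0 then fun_table L S (Suc (prod_encode (sd (hdc n - 1), tlc (mapc sd (tlc n)))))
         else fun_table L T (Suc (prod_encode (sd (hdc n - 1), tlc (mapc sd (tlc n)))))) = sd (hdc (tlc n))
     else False)"

lemma cpred_comp1: "cpred X 1 (\<lambda>xs. Q (xs ! 0)) \<Longrightarrow> cfn X k A \<Longrightarrow> cpred X k (\<lambda>xs. Q (A xs))"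
  unfolding cpred_def by (rule cfn_comp1[where g="\<lambda>a. if Q a then 1 else 0"])

lemma cpred_inU0:
  assumes "comp_set X (univ S)" "comp_set X (univ T)"
  shows "cpred X 1 (\<lambda>xs. inU S T (xs ! 0))"
  unfolding inU_def
  by (intro cpred_if cpred_eq0 cpred_ext assms cfn_fst cfn_snd cfn_proj cfn_const) auto

lemma cpred_allU:
  assumes "comp_set X (univ S)" "comp_set X (univ T)" "cfn X k A"
  shows "cpred X k (\<lambda>xs. allU S T (A xs))"
proof -
  have "cpred X 1 (\<lambda>xs. allU S T (xs ! 0))"
  proof (rule cpred_ball[where P="\<lambda>ys. inU S T (nthc (ys ! 0) (ys ! 1))" and B="\<lambda>xs. lenc (xs ! 0)"])
    show "cpred X (Suc 1) (\<lambda>ys. inU S T (nthc (ys ! 0) (ys ! 1)))"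
      by (intro cpred_comp1[OF cpred_inU0[OF assms(1,2)]] cfn_nthc cfn_proj) auto
    show "cfn X 1 (\<lambda>xs. lenc (xs ! 0))" by (intro cfn_lenc cfn_proj) auto
  qed (simp add: allU_def)
  then show ?thesis using assms(3) by (rule cpred_comp1)
qed

lemma cpred_sameC:
  assumes "cfn X k A"
  shows "cpred X k (\<lambda>xs. sameC (A xs))"
proof -
  have "cpred X 1 (\<lambda>xs. sameC (xs ! 0))"
  proof (rule cpred_ball[where P="\<lambda>ys. cp (nthc (ys ! 0) (ys ! 1)) = cp (hdc (ys ! 1))" and B="\<lambda>xs. lenc (xs ! 0)"])
    show "cpred X (Suc 1) (\<lambda>ys. cp (nthc (ys ! 0) (ys ! 1)) = cp (hdc (ys ! 1)))"
      by (intro cpred_eq0 cfn_fst cfn_hdc cfn_nthc cfn_proj) auto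
    show "cfn X 1 (\<lambda>xs. lenc (xs ! 0))" by (intro cfn_lenc cfn_proj) auto
  qed (simp add: sameC_def)
  then show ?thesis using assms by (rule cpred_comp1)
qed

lemma cfn_sd0: "cfn X 1 (\<lambda>xs. sd (xs ! 0))" by (intro cfn_snd cfn_proj) auto

lemma cpred_Dec:
  assumes "comp_set {} (univ S)" "comp_set {} (univ T)" "comp_set {} (rel_diag L S)" "comp_set {} (rel_diag L T)"
    "comp_fun {} (fun_table L S)" "comp_fun {} (fun_table L T)" "comp_set {} (rels L)" "comp_set {} (funs L)"
    "comp_fun {} (rar L)" "comp_fun {} (far L)"
  shows "cpred {} 1 (\<lambda>xs. Dec L S T (xs ! 0))"
  unfolding Dec_def
  by (intro cpred_conj cpred_not cpred_eq0 cpred_if cfn_if cpred_const cpred_allU cpred_sameC cpred_ext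
      cfn_ext[OF assms(5)] cfn_ext[OF assms(6)] cfn_ext[OF assms(9)] cfn_ext[OF assms(10)] cfn_Suc cfn_pe cfn_mapc[OF cfn_sd0] cfn_fst cfn_snd cfn_hdc cfn_tlc cfn_lenc cfn_nthc cfn_sub
      cfn_proj cfn_const assms(1-4,7,8)) auto

lemma rel_diag_enc: "list_encode (s # as) \<in> rel_diag L M \<longleftrightarrow>
   s \<in> rels L \<and> length as = rar L s \<and> set as \<subseteq> univ M \<and> rel M s as"
proof
  assume "list_encode (s # as) \<in> rel_diag L M"
  then obtain i bs where "list_encode (s # as) = list_encode (i # bs)" "i \<in> rels L" "length bs = rar L i"
    "set bs \<subseteq> univ M" "rel M i bs" unfolding rel_diag_def by blast
  moreover then have "s = i" "as = bs" using list_encode_eq by blast+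
  ultimately show "s \<in> rels L \<and> length as = rar L s \<and> set as \<subseteq> univ M \<and> rel M s as" by simp
qed (auto simp: rel_diag_def)

lemma rel_diag_0: "0 \<notin> rel_diag L M"
  unfolding rel_diag_def by auto

lemma fun_table_enc: "fun_table L M (list_encode (i # as)) =
   (if i \<in> funs L \<and> length as = far L i \<and> set as \<subseteq> univ M then fn M i as else 0)"
  unfolding fun_table_def by (simp only: list_encode_inverse) simp

lemma hdc_0: "hdc 0 = 0" by (simp add: hdc_def pd0)

lemma cp_hdc: "cp (hdc (list_encode as)) = c0 as"
  by (cases as) (auto simp: c0_def hdc_0 pd0)

lemma allU_enc: "allU S T (list_encode as) \<longleftrightarrow> (\<forall>a\<in>set as. inU S T a)"
  unfolding allU_def lenc_enc using nth_mem by (fastforce simp: nthc_enc in_set_conv_nth)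

lemma sameC_enc: "sameC (list_encode as) \<longleftrightarrow> samec as"
proof -
  have "sameC (list_encode as) \<longleftrightarrow> (\<forall>i<length as. cp (as ! i) = c0 as)"
    unfolding sameC_def lenc_enc cp_hdc by (auto simp: nthc_enc)
  then show ?thesis unfolding samec_def using nth_mem by (fastforce simp: in_set_conv_nth)
qed

lemma samec_univ:
  assumes "samec as" "\<forall>a\<in>set as. inU S T a"
  shows "c0 as = 0 \<Longrightarrow> set (map sd as) \<subseteq> univ S" "c0 as \<noteq> 0 \<Longrightarrow> set (map sd as) \<subseteq> univ T"
  using assms unfolding samec_def inU_def by auto

lemma samec_tl: "samec as \<Longrightarrow> \<forall>a\<in>set as. inU S T a \<Longrightarrow>
   (c0 as = 0 \<longrightarrow> set (map sd (tl as)) \<subseteq> univ S) \<and> (c0 as \<noteq> 0 \<longrightarrow> set (map sd (tl as)) \<subseteq> univ T)"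
  using samec_univ[of as S T] by (cases as) auto

lemma univ_Cop: "univ (Cop S T) = {u. inU S T u}" by (simp add: Cop_def)

lemma Dec_correct: "Dec L S T n \<longleftrightarrow> n \<in> rel_diag (Lp L) (Cop S T)"
proof (cases "list_decode n")
  case Nil
  then have "n = 0" by (metis list_decode_inverse list_encode.simps(1))
  then show ?thesis by (simp add: Dec_def rel_diag_0)
next
  case (Cons s as)
  then have n: "n = list_encode (s # as)" by (metis list_decode_inverse)
  let ?t = "list_encode as"
  have h: "hdc n = s" "tlc n = ?t" "n \<noteq> 0" using n by auto
  have m: "mapc sd ?t = list_encode (map sd as)" by (rule mapc_enc)
  have U: "set as \<subseteq> univ (Cop S T) \<longleftrightarrow> (\<forall>a\<in>set as. inU S T a)" by (auto simp: univ_Cop)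
  show ?thesis
  proof (cases s)
    case 0
    show ?thesis
    proof
      assume "Dec L S T n"
      then have "length as = 2" "\<forall>a\<in>set as. inU S T a" "cp (as ! 0) = cp (as ! 1)"
        using h 0 by (auto simp: Dec_def lenc_enc allU_enc nthc_enc)
      then show "n \<in> rel_diag (Lp L) (Cop S T)"
        unfolding n rel_diag_enc using 0 by (auto simp: Lp_def Cop_def univ_Cop)
    next
      assume "n \<in> rel_diag (Lp L) (Cop S T)"
      then have "length as = 2" "\<forall>a\<in>set as. inU S T a" "cp (as ! 0) = cp (as ! 1)"
        unfolding n rel_diag_enc using 0 by (auto simp: Lp_def Cop_def)
      then show "Dec L S T n"
        using h 0 by (auto simp: Dec_def lenc_enc allU_enc nthc_enc)
    qed
  next
    case (Suc m)
    obtain a i where ai: "m = prod_encode (a, i)" by (metis prod_decode_inverse surj_pair)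
    have s: "s = Suc (prod_encode (a, i))" using Suc ai by simp
    have rels: "s \<in> rels (Lp L) \<longleftrightarrow> (a = 0 \<and> i \<in> rels L) \<or> (a = 1 \<and> i \<in> funs L)"
      using s by (auto simp: Lp_def)
    have rar: "rar (Lp L) s = (if a = 0 then rar L i else if a = 1 then Suc (far L i) else 0)"
      using s by (simp add: Lp_def)
    have rel: "rel (Cop S T) s as = (if a = 0 then samec as \<and>
            (if c0 as = 0 then rel S i (map sd as) else rel T i (map sd as))
       else if a = 1 then as \<noteq> [] \<and> samec as \<and>
            (if c0 as = 0 then fn S i (map sd (tl as)) else fn T i (map sd (tl as))) = sd (hd as)
       else False)"
      using s by (simp add: Cop_def)
    have D: "Dec L S T n \<longleftrightarrow> (if a = 0 then i \<in> rels L \<and> length as = rar L i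
        \<and> (\<forall>a\<in>set as. inU S T a) \<and> samec as \<and>
        (if c0 as = 0 then list_encode (i # map sd as) \<in> rel_diag L S
         else list_encode (i # map sd as) \<in> rel_diag L T)
     else if a = 1 then i \<in> funs L \<and> length as = Suc (far L i)
        \<and> (\<forall>a\<in>set as. inU S T a) \<and> samec as \<and>
        (if c0 as = 0 then fun_table L S (list_encode (i # map sd (tl as)))
         else fun_table L T (list_encode (i # map sd (tl as)))) = sd (hdc ?t)
     else False)"
      unfolding Dec_def h(1,2) using s h(3)
      by (simp add: lenc_enc allU_enc sameC_enc cp_hdc m tlc_tl map_tl)
    show ?thesis
    proof (cases "a = 0")
      case True
      then show ?thesis unfolding D unfolding n rel_diag_enc rels rar rel U using samec_univ[of as S T]
        by (auto simp: rel_diag_enc)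
    next
      case F: False
      show ?thesis
      proof (cases "a = 1")
        case True
        show ?thesis
        proof (cases "as = []")
          case True
          then show ?thesis unfolding D unfolding n rel_diag_enc rels rar rel U by auto
        next
          case ne: False
          have hd: "hdc ?t = hd as" using ne by (rule hdc_hd)
          show ?thesis unfolding D unfolding n rel_diag_enc rels rar rel U hd using True samec_tl[of as S T]
            by (auto simp: fun_table_enc[unfolded list_encode.simps] map_tl)
        qed
      next
        case False
        then show ?thesis unfolding D unfolding n rel_diag_enc rels rar rel U using F by auto
      qed
    qed
  qed
qed

abbreviation sR :: "nat \<Rightarrow> nat" where "sR i \<equiv> Suc (prod_encode (0, i))"
abbreviation sF :: "nat \<Rightarrow> nat" where "sF i \<equiv> Suc (prod_encode (1, i))"

lemma rels_Lp: "s \<in> rels (Lp L) \<longleftrightarrow> s = 0 \<or> (\<exists>i\<in>rels L. s = sR i) \<or> (\<exists>i\<in>funs L. s = sF i)"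
  by (auto simp: Lp_def)

lemma rar_Lp: "rar (Lp L) 0 = 2" "rar (Lp L) (sR i) = rar L i" "rar (Lp L) (sF i) = Suc (far L i)"
  by (auto simp: Lp_def)

lemma rel_Cop_E: "rel (Cop S T) 0 as = (length as = 2 \<and> cp (as ! 0) = cp (as ! 1))"
  by (simp add: Cop_def)
lemma rel_Cop_R: "rel (Cop S T) (sR i) as = (samec as \<and> rel (if c0 as = 0 then S else T) i (map sd as))"
  by (simp add: Cop_def)
lemma rel_Cop_F: "rel (Cop S T) (sF i) as =
   (as \<noteq> [] \<and> samec as \<and> fn (if c0 as = 0 then S else T) i (map sd (tl as)) = sd (hd as))"
  by (simp add: Cop_def)

lemma inU_iff: "inU S T u \<longleftrightarrow> sd u \<in> univ (if cp u = 0 then S else T)"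
  by (simp add: inU_def)

lemma samec_map:
  assumes "inj phi" "\<And>a. cp (F a) = phi (cp a)"
  shows "samec (map F as) \<longleftrightarrow> samec as" "as \<noteq> [] \<Longrightarrow> c0 (map F as) = phi (c0 as)"
proof -
  show "as \<noteq> [] \<Longrightarrow> c0 (map F as) = phi (c0 as)" using assms by (cases as) (auto simp: c0_def)
  show "samec (map F as) \<longleftrightarrow> samec as"
  proof (cases as)
    case Nil then show ?thesis by (simp add: samec_def)
  next
    case (Cons b bs)
    then show ?thesis using assms unfolding samec_def c0_def by (auto simp: inj_eq)
  qed
qed

lemma samec_c: "samec as \<Longrightarrow> a \<in> set as \<Longrightarrow> cp a = c0 as"
  by (simp add: samec_def)

lemma emb_Cop:
  fixes phi :: "nat \<Rightarrow> nat" and g :: "nat \<Rightarrow> nat \<Rightarrow> nat" and S T S' T' :: struc and L :: signature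
  defines "Sc \<equiv> \<lambda>c. if c = 0 then S else T"
  defines "Tc \<equiv> \<lambda>c. if phi c = 0 then S' else T'"
  defines "F \<equiv> \<lambda>u. prod_encode (phi (cp u), g (cp u) (sd u))"
  assumes phi: "inj phi"
    and emb: "\<And>c. is_emb L (Sc c) (Tc c) (g c)"
    and wfS: "wf_struc L S" and wfT: "wf_struc L T"
    and zero: "\<And>i. i \<in> rels L \<Longrightarrow> rar L i = 0 \<Longrightarrow> (rel S i [] \<longleftrightarrow> rel S' i [])"
  shows "is_emb (Lp L) (Cop S T) (Cop S' T') F"
proof -
  have cpF: "cp (F u) = phi (cp u)" and sdF: "sd (F u) = g (cp u) (sd u)" for u by (simp_all add: F_def)
  have wf: "wf_struc L (Sc c)" for c using wfS wfT by (simp add: Sc_def)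
  have uS: "u \<in> univ (Cop S T) \<longleftrightarrow> sd u \<in> univ (Sc (cp u))" for u
    by (simp add: univ_Cop inU_iff Sc_def)
  have uT: "v \<in> univ (Cop S' T') \<longleftrightarrow> sd v \<in> univ (if cp v = 0 then S' else T')" for v
    by (simp add: univ_Cop inU_iff)
  have injg: "inj_on (g c) (univ (Sc c))" and img: "g c ` univ (Sc c) \<subseteq> univ (Tc c)" for c
    using emb[of c] by (simp_all add: is_emb_def)
  have relg: "\<And>i as. i \<in> rels L \<Longrightarrow> length as = rar L i \<Longrightarrow> set as \<subseteq> univ (Sc c) \<Longrightarrow>
      rel (Sc c) i as \<longleftrightarrow> rel (Tc c) i (map (g c) as)" for c
    using emb[of c] by (simp add: is_emb_def)
  have fng: "\<And>i as. i \<in> funs L \<Longrightarrow> length as = far L i \<Longrightarrow> set as \<subseteq> univ (Sc c) \<Longrightarrow>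
      g c (fn (Sc c) i as) = fn (Tc c) i (map (g c) as)" for c
    using emb[of c] by (simp add: is_emb_def)
  have inj: "inj_on F (univ (Cop S T))"
  proof (rule inj_onI)
    fix u v assume u: "u \<in> univ (Cop S T)" and v: "v \<in> univ (Cop S T)" and e: "F u = F v"
    have "phi (cp u) = phi (cp v)" using arg_cong[OF e, of cp] by (simp add: cpF)
    then have c: "cp u = cp v" using phi by (simp add: inj_eq)
    have "g (cp u) (sd u) = g (cp u) (sd v)" using arg_cong[OF e, of sd] c by (simp add: sdF)
    moreover have "sd u \<in> univ (Sc (cp u))" "sd v \<in> univ (Sc (cp u))" using u v c uS by auto
    ultimately have "sd u = sd v" using injg[of "cp u"] by (simp add: inj_on_eq_iff)
    then have "prod_decode u = prod_decode v" using c by (simp add: prod_eq_iff)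
    then show "u = v" by simp
  qed
  have im: "F ` univ (Cop S T) \<subseteq> univ (Cop S' T')"
  proof
    fix w assume "w \<in> F ` univ (Cop S T)"
    then obtain u where u: "u \<in> univ (Cop S T)" "w = F u" by auto
    then have "sd w \<in> univ (Tc (cp u))" using img[of "cp u"] uS sdF by auto
    then show "w \<in> univ (Cop S' T')" using uT u cpF by (simp add: Tc_def)
  qed
  have rels: "rel (Cop S T) s as \<longleftrightarrow> rel (Cop S' T') s (map F as)"
    if s: "s \<in> rels (Lp L)" and len: "length as = rar (Lp L) s" and sub: "set as \<subseteq> univ (Cop S T)" for s as
  proof -
    consider "s = 0" | i where "i \<in> rels L" "s = sR i" | i where "i \<in> funs L" "s = sF i"
      using s unfolding rels_Lp by (elim disjE bexE) (rule that; assumption)+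
    then show ?thesis
    proof cases
      case 1
      then have "length as = 2" using len rar_Lp by simp
      then obtain x y where xy: "as = [x, y]" using len2 by blast
      show ?thesis unfolding xy using 1 by (simp add: rel_Cop_E cpF inj_eq[OF phi])
    next
      case (2 i)
      have l: "length as = rar L i" using len 2 rar_Lp by simp
      show ?thesis
      proof (cases "as = []")
        case True
        then show ?thesis using 2 l zero by (simp add: rel_Cop_R samec_def c0_def)
      next
        case ne: False
        show ?thesis
        proof (cases "samec as")
          case False
          then show ?thesis using 2 samec_map(1)[OF phi cpF] by (simp add: rel_Cop_R)
        next
          case True
          let ?c = "c0 as"
          have sub': "set (map sd as) \<subseteq> univ (Sc ?c)" using sub True uS samec_c by auto
          have m: "map sd (map F as) = map (g ?c) (map sd as)"
            using True samec_c by (auto simp: sdF)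
          have "rel (Cop S T) s as \<longleftrightarrow> rel (Sc ?c) i (map sd as)"
            using 2 True by (simp add: rel_Cop_R Sc_def)
          also have "\<dots> \<longleftrightarrow> rel (Tc ?c) i (map (g ?c) (map sd as))"
            using relg[OF 2(1) _ sub'] l by simp
          also have "\<dots> \<longleftrightarrow> rel (Cop S' T') s (map F as)"
          proof -
            have m': "map (sd \<circ> F) as = map (g ?c \<circ> sd) as" using m by simp
            show ?thesis using 2 True ne samec_map[OF phi cpF] by (simp add: rel_Cop_R Tc_def m')
          qed
          finally show ?thesis .
        qed
      qed
    next
      case (3 i)
      have l: "length as = Suc (far L i)" using len 3 rar_Lp by simp
      then obtain b cs where bcs: "as = b # cs" by (cases as) auto
      show ?thesis
      proof (cases "samec as")
        case False
        then show ?thesis using 3 samec_map(1)[OF phi cpF] by (simp add: rel_Cop_F rel_Cop_F[unfolded One_nat_def])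
      next
        case True
        let ?c = "c0 as"
        have sub': "set (map sd as) \<subseteq> univ (Sc ?c)" using sub True uS samec_c by auto
        then have subc: "set (map sd cs) \<subseteq> univ (Sc ?c)" and sb: "sd b \<in> univ (Sc ?c)" using bcs by auto
        have lc: "length (map sd cs) = far L i" using l bcs by simp
        have m: "map sd (map F as) = map (g ?c) (map sd as)"
          using True samec_c by (auto simp: sdF)
        have fin: "fn (Sc ?c) i (map sd cs) \<in> univ (Sc ?c)"
          using wf[of ?c] 3(1) lc subc unfolding wf_struc_def by blast
        have "rel (Cop S T) s as \<longleftrightarrow> fn (Sc ?c) i (map sd cs) = sd b"
          using 3 True bcs by (simp add: rel_Cop_F rel_Cop_F[unfolded One_nat_def] Sc_def)
        also have "\<dots> \<longleftrightarrow> g ?c (fn (Sc ?c) i (map sd cs)) = g ?c (sd b)"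
          using inj_on_eq_iff[OF injg[of ?c] fin sb] by simp
        also have "\<dots> \<longleftrightarrow> fn (Tc ?c) i (map (g ?c) (map sd cs)) = g ?c (sd b)"
          using fng[OF 3(1) lc subc] by simp
        also have "\<dots> \<longleftrightarrow> rel (Cop S' T') s (map F as)"
        proof -
          have m': "map (sd \<circ> F) cs = map (g ?c \<circ> sd) cs" using m bcs by simp
          have hb: "sd (F b) = g ?c (sd b)" using m bcs by simp
          show ?thesis using 3 True bcs samec_map[OF phi cpF, of as]
            by (simp add: rel_Cop_F rel_Cop_F[unfolded One_nat_def] Tc_def m' hb)
        qed
        finally show ?thesis .
      qed
    qed
  qed
  show ?thesis unfolding is_emb_def using inj im rels by (simp add: Lp_def)
qed

lemma emb_extract:
  assumes G: "is_emb (Lp L) (Cop A B) (Cop B B) G" and wfA: "wf_struc L A"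
  shows "is_emb L A B (\<lambda>x. sd (G (prod_encode (0, x))))"
proof -
  define e where "e = (\<lambda>x::nat. prod_encode (0, x))"
  define h where "h = (\<lambda>x. sd (G (e x)))"
  have eU: "e x \<in> univ (Cop A B)" if "x \<in> univ A" for x
    using that by (simp add: e_def univ_Cop inU_def)
  have injG: "inj_on G (univ (Cop A B))" and imG: "G ` univ (Cop A B) \<subseteq> univ (Cop B B)"
    using G by (simp_all add: is_emb_def)
  have relG: "\<And>s as. s \<in> rels (Lp L) \<Longrightarrow> length as = rar (Lp L) s \<Longrightarrow> set as \<subseteq> univ (Cop A B) \<Longrightarrow>
      rel (Cop A B) s as \<longleftrightarrow> rel (Cop B B) s (map G as)"
    using G by (simp add: is_emb_def)
  have hU: "h x \<in> univ B" if "x \<in> univ A" for x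
    using imG eU[OF that] by (auto simp: h_def univ_Cop inU_def)
  have same: "cp (G (e x)) = cp (G (e y))" if "x \<in> univ A" "y \<in> univ A" for x y
  proof -
    have "rel (Cop A B) 0 [e x, e y]" by (simp add: rel_Cop_E e_def)
    then have "rel (Cop B B) 0 (map G [e x, e y])"
      using relG[of 0 "[e x, e y]"] eU that by (simp add: rels_Lp rar_Lp)
    then show ?thesis by (simp add: rel_Cop_E)
  qed
  have inj: "inj_on h (univ A)"
  proof (rule inj_onI)
    fix x y assume x: "x \<in> univ A" and y: "y \<in> univ A" and "h x = h y"
    then have "prod_decode (G (e x)) = prod_decode (G (e y))"
      using same[OF x y] by (simp add: h_def prod_eq_iff)
    then have "G (e x) = G (e y)" by simp
    then have "e x = e y" using injG eU x y by (meson inj_on_eq_iff)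
    then show "x = y" by (simp add: e_def)
  qed
  have sameL: "samec (map G (map e as))" if "set as \<subseteq> univ A" for as
  proof (cases as)
    case Nil then show ?thesis by (simp add: samec_def)
  next
    case (Cons a r)
    then show ?thesis using that same unfolding samec_def c0_def by auto
  qed
  have mapsd: "map sd (map G (map e as)) = map h as" for as by (simp add: h_def)
  have sdmap: "map sd (map e as) = as" for as by (induction as) (simp_all add: e_def)
  have c0e: "c0 (map e as) = 0" for as by (cases as) (auto simp: c0_def e_def)
  have samee: "samec (map e as)" for as unfolding samec_def c0e by (simp add: e_def)
  have eUs: "set (map e as) \<subseteq> univ (Cop A B)" if "set as \<subseteq> univ A" for as using that eU by auto
  have rels: "rel A i as \<longleftrightarrow> rel B i (map h as)"
    if i: "i \<in> rels L" and l: "length as = rar L i" and sub: "set as \<subseteq> univ A" for i as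
  proof -
    have "rel A i as \<longleftrightarrow> rel (Cop A B) (sR i) (map e as)"
      using sdmap[of as] by (simp add: rel_Cop_R c0e samee)
    also have "\<dots> \<longleftrightarrow> rel (Cop B B) (sR i) (map G (map e as))"
      using relG[of "sR i" "map e as"] i l eUs[OF sub] by (simp add: rels_Lp rar_Lp)
    also have "\<dots> \<longleftrightarrow> rel B i (map h as)"
      using sameL[OF sub] by (simp add: rel_Cop_R h_def comp_def)
    finally show ?thesis .
  qed
  have fns: "h (fn A i as) = fn B i (map h as)"
    if i: "i \<in> funs L" and l: "length as = far L i" and sub: "set as \<subseteq> univ A" for i as
  proof -
    let ?b = "fn A i as"
    have b: "?b \<in> univ A" using wfA i l sub unfolding wf_struc_def by blast
    have sub2: "set (?b # as) \<subseteq> univ A" using b sub by auto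
    have "rel (Cop A B) (sF i) (map e (?b # as))"
      unfolding rel_Cop_F using samee[of "?b # as"] c0e[of "?b # as"] sdmap[of as] by (simp add: e_def)
    then have "rel (Cop B B) (sF i) (map G (map e (?b # as)))"
      using relG[of "sF i" "map e (?b # as)"] i l eUs[OF sub2] by (simp add: rels_Lp rar_Lp rar_Lp[unfolded One_nat_def])
    then show ?thesis unfolding rel_Cop_F by (simp add: h_def comp_def)
  qed
  have hh: "(\<lambda>x. sd (G (prod_encode (0, x)))) = h" by (simp add: h_def e_def)
  show ?thesis unfolding hh is_emb_def
    using inj hU rels fns by auto
qed

lemma comp_sig_Lp:
  assumes "comp_sig L"
  shows "comp_sig (Lp L)"
proof -
  have a: "comp_set {} (rels L)" "comp_fun {} (rar L)" "comp_set {} (funs L)" "comp_fun {} (far L)"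
    using assms by (simp_all add: comp_sig_def)
  have r: "n \<in> rels (Lp L) \<longleftrightarrow> n = 0 \<or> (\<not> n = 0 \<and> ((cp (n - 1) = 0 \<and> sd (n - 1) \<in> rels L)
            \<or> (cp (n - 1) = 1 \<and> sd (n - 1) \<in> funs L)))" for n
  proof (cases n)
    case (Suc m)
    obtain a i where "m = prod_encode (a, i)" by (metis prod_decode_inverse surj_pair)
    then show ?thesis using Suc by (auto simp: Lp_def)
  qed (simp add: Lp_def)
  have 1: "comp_set {} (rels (Lp L))"
    unfolding comp_set_cpred
    by (rule cpred_eq[OF _ r[symmetric]])
       (intro cpred_disj cpred_conj cpred_not cpred_eq0 cpred_ext a cfn_fst cfn_snd cfn_sub cfn_proj cfn_const; simp)
  have 2: "comp_fun {} (rar (Lp L))"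
    unfolding comp_fun_cfn Lp_def signature.simps
    by (intro cfn_if cpred_eq0 cfn_ext[OF a(2)] cfn_ext[OF a(4)] cfn_Suc cfn_fst cfn_snd cfn_sub cfn_proj cfn_const; simp)
  have 3: "comp_set {} (funs (Lp L))"
    unfolding comp_set_cpred Lp_def signature.simps
    by (rule cpred_eq[OF cpred_const[of _ _ False]]) simp
  have 4: "comp_fun {} (far (Lp L))"
    unfolding comp_fun_cfn Lp_def signature.simps by (rule cfn_const)
  show ?thesis using 1 2 3 4 by (simp add: comp_sig_def)
qed

lemma comp_struc_Cop:
  assumes L: "comp_sig L" and S: "comp_struc L S" and T: "comp_struc L T"
  shows "comp_struc (Lp L) (Cop S T)"
proof -
  have a: "comp_set {} (rels L)" "comp_fun {} (rar L)" "comp_set {} (funs L)" "comp_fun {} (far L)"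
    using L by (simp_all add: comp_sig_def)
  have s: "wf_struc L S" "comp_set {} (univ S)" "comp_set {} (rel_diag L S)" "comp_fun {} (fun_table L S)"
    using S by (simp_all add: comp_struc_def)
  have t: "wf_struc L T" "comp_set {} (univ T)" "comp_set {} (rel_diag L T)" "comp_fun {} (fun_table L T)"
    using T by (simp_all add: comp_struc_def)
  obtain x where x: "x \<in> univ S" using s(1) by (auto simp: wf_struc_def)
  have wf: "wf_struc (Lp L) (Cop S T)"
    unfolding wf_struc_def using x
    by (auto simp: Lp_def univ_Cop inU_def intro!: exI[of _ "prod_encode (0, x)"])
  have u: "comp_set {} (univ (Cop S T))"
    unfolding comp_set_cpred univ_Cop mem_Collect_eq by (rule cpred_inU0[OF s(2) t(2)])
  have r: "comp_set {} (rel_diag (Lp L) (Cop S T))"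
    unfolding comp_set_cpred
    by (rule cpred_eq[OF cpred_Dec[OF s(2) t(2) s(3) t(3) s(4) t(4) a(1) a(3) a(2) a(4)]])
       (simp add: Dec_correct)
  have "fun_table (Lp L) (Cop S T) = (\<lambda>n. 0)"
    by (rule ext) (simp add: fun_table_def Lp_def split: list.split)
  then have f: "comp_fun {} (fun_table (Lp L) (Cop S T))"
    unfolding comp_fun_cfn by (simp add: cfn_const)
  show ?thesis using wf u r f by (simp add: comp_struc_def)
qed

lemma is_emb_id: "is_emb L B B id"
  by (simp add: is_emb_def)
lemma is_emb_id': "is_emb L B B (\<lambda>a. a)"
  by (simp add: is_emb_def)

lemma emb_zero:
  assumes "is_emb L A B f" "i \<in> rels L" "rar L i = 0"
  shows "rel A i [] \<longleftrightarrow> rel B i []"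
  using assms unfolding is_emb_def by force

theorem proposition3p4:
  fixes D :: "nat set"
  shows "low_for_embeddings D \<longleftrightarrow> low_for_biembeddings D"
proof
  assume "low_for_embeddings D"
  then show "low_for_biembeddings D"
    unfolding low_for_embeddings_def low_for_biembeddings_def biemb_X_def by blast
next
  assume lb: "low_for_biembeddings D"
  show "low_for_embeddings D"
    unfolding low_for_embeddings_def
  proof (intro allI impI)
    fix L A B
    assume c: "comp_sig L \<and> comp_struc L A \<and> comp_struc L B" and "emb_X D L A B"
    then obtain f where f: "comp_fun D f" "is_emb L A B f" unfolding emb_X_def by blast
    have wfA: "wf_struc L A" and wfB: "wf_struc L B" using c by (simp_all add: comp_struc_def)
    have zero: "\<And>i. i \<in> rels L \<Longrightarrow> rar L i = 0 \<Longrightarrow> (rel A i [] \<longleftrightarrow> rel B i [])"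
      using emb_zero[OF f(2)] by blast
    define F1 where "F1 = (\<lambda>u. prod_encode (id (cp u), (\<lambda>c. if c = 0 then f else id) (cp u) (sd u)))"
    define F2 where "F2 = (\<lambda>u. prod_encode (Suc (cp u), (\<lambda>c. id) (cp u) (sd u)))"
    have e1: "is_emb (Lp L) (Cop A B) (Cop B B) F1"
      unfolding F1_def
      by (rule emb_Cop) (auto simp: f(2) is_emb_id is_emb_id' wfA wfB zero)
    have e2: "is_emb (Lp L) (Cop B B) (Cop A B) F2"
      unfolding F2_def
      by (rule emb_Cop) (auto simp: is_emb_id is_emb_id' wfB zero)
    have F1eq: "F1 = (\<lambda>u. prod_encode (cp u, if cp u = 0 then f (sd u) else sd u))"
      by (auto simp: F1_def)
    have cF1: "comp_fun D F1"
      unfolding F1eq comp_fun_cfn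
      by (intro cfn_pe cfn_if cpred_eq0 cfn_ext[OF f(1)] cfn_fst cfn_snd cfn_proj cfn_const; simp)
    have cF2: "comp_fun D F2"
      unfolding F2_def comp_fun_cfn id_def
      by (intro cfn_pe cfn_Suc cfn_fst cfn_snd cfn_proj; simp)
    have "biemb_X D (Lp L) (Cop A B) (Cop B B)"
      unfolding biemb_X_def emb_X_def using e1 e2 cF1 cF2 by blast
    moreover have "comp_sig (Lp L)" using c comp_sig_Lp by blast
    moreover have "comp_struc (Lp L) (Cop A B)" "comp_struc (Lp L) (Cop B B)"
      using c comp_struc_Cop by blast+
    ultimately have "biemb_X {} (Lp L) (Cop A B) (Cop B B)"
      using lb unfolding low_for_biembeddings_def by blast
    then obtain G where G: "comp_fun {} G" "is_emb (Lp L) (Cop A B) (Cop B B) G"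
      unfolding biemb_X_def emb_X_def by blast
    have "is_emb L A B (\<lambda>x. sd (G (prod_encode (0, x))))" by (rule emb_extract[OF G(2) wfA])
    moreover have "comp_fun {} (\<lambda>x. sd (G (prod_encode (0, x))))"
      unfolding comp_fun_cfn
      by (intro cfn_snd cfn_ext[OF G(1)] cfn_pe cfn_proj cfn_const; simp)
    ultimately show "emb_X {} L A B" unfolding emb_X_def by blast
  qed
qed

end
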